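(* Let $(X,V)$ and $(\overline{X},\overline{V})$ be global solutions of the discrete Motsch–Tadmor model (as in the context) whose initial data satisfy \[ \max\{\|\Delta^x(0)\|_F,\|\Delta^{\overline{x}}(0)\|_F\}<M,\quad \|\Delta^v(0)\|_F<\kappa\int_{\|\Delta^x(0)\|_F}^M\psi(s)\,ds,\quad \|\Delta^{\overline{v}}(0)\|_F<\kappa\int_{\|\Delta^{\overline{x}}(0)\|_F}^M\psi(s)\,ds. \] Define $\lambda(n)=\min_{1\le i,j\le N}(\overline{\phi}_{ij}(n)+\overline{\phi}_{ji}(n))$ and $\alpha(n)=\max_{1\le i,j\le N}(1-\overline{\phi}_{ij}(n)-\overline{\phi}_{ii}(n))^2$. Then for all $n\ge0$, \[ \|\Delta^v(n+1)-\Delta^{\overline{v}}(n+1)\|_F^2\le\mathcal{C}_1\|\Delta^v(n)-\Delta^{\overline{v}}(n)\|_F^2+\mathcal{C}_2\|\Delta^v(n)-\Delta^{\overline{v}}(n)\|_F\|\Delta^v(n)\|_F+\mathcal{C}_3\|\Delta^v(n)\|_F^2, \] where \[ \mathcal{C}_1=(1-h\kappa\lambda(n))^2+4h^2\kappa^2\Big(\alpha(n)+\frac{L_a^2M^2}{Nc_1^2}\big(1+\tfrac{c_2}{c_1}\big)^2\Big)+2\sqrt{2}h\kappa(1-h\kappa\lambda(n))\Big(\alpha(n)+\frac{L_a^2M^2}{c_1^2}\big(1+\tfrac{c_2}{c_1}\big)^2\Big)^{1/2}, \] \[ \mathcal{C}_2=\frac{8h\kappa L_aM}{c_1}(1-h\kappa\lambda(n))\big(1+\tfrac{c_2}{c_1}\big),\qquad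 \mathcal{C}_3=\frac{32h^2\kappa^2L_a^2M^2}{c_1^2}\big(1+\tfrac{c_2}{c_1}\big)^2 . \]
   Context: Discrete MT model: fix $N\ge1$, $d\ge1$, $\kappa>0$, $h>0$, and $a:[0,\infty)\to\mathbb{R}$ with constants $0<c_1\le c_2$, $c_1\le a\le c_2$, $|a(r_1)-a(r_2)|\le L_a|r_1-r_2|$ ($L_a>0$); $0<h<\min\{1,1/\kappa\}$. A solution satisfies $x_i(n+1)=x_i(n)+hv_i(n)$, $v_i(n+1)=v_i(n)+h\kappa\sum_j\phi_{ij}(n)(v_j(n)-v_i(n))$ with $\phi_{ij}(n)=\frac{a(\|x_i(n)-x_j(n)\|)}{\sum_ka(\|x_i(n)-x_k(n)\|)}$; for the second solution $\overline{\phi}_{ij}(n)=\frac{a(\|\overline{x}_i(n)-\overline{x}_j(n)\|)}{\sum_ka(\|\overline{x}_i(n)-\overline{x}_k(n)\|)}$. Notation: $\Delta^x_{ij}=x_i-x_j$, $\Delta^v_{ij}=v_i-v_j$, similarly $\Delta^{\overline{x}},\Delta^{\overline{v}}$; $\|A\|_F=(\sum_{i,j}\|A_{ij}\|^2)^{1/2}$. Constants: $\|\phi\|_{\mathrm{Lip}}=\frac{L_a}{Nc_1}(1+\frac{c_2}{c_1})$, $M=\frac{1}{4N\|\phi\|_{\mathrm{Lip}}}$, $\psi(s)=1-\|\phi\|_{\mathrm{Lip}}Ns$. *)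

theory Defs
  imports "HOL-Analysis.Analysis"
begin

text \<open>Agents are indexed by 0..N-1; a trajectory is x :: nat => nat => real^'d
  with x n i the state of agent i at time step n.\<close>

definition mt_phi :: "nat \<Rightarrow> (real \<Rightarrow> real) \<Rightarrow> (nat \<Rightarrow> nat \<Rightarrow> real^'d) \<Rightarrow> nat \<Rightarrow> nat \<Rightarrow> nat \<Rightarrow> real" where
  "mt_phi N a x n i j =
     a (norm (x n i - x n j)) / (\<Sum>k<N. a (norm (x n i - x n k)))"

definition mt_solution :: "nat \<Rightarrow> real \<Rightarrow> real \<Rightarrow> (real \<Rightarrow> real)
    \<Rightarrow> (nat \<Rightarrow> nat \<Rightarrow> real^'d) \<Rightarrow> (nat \<Rightarrow> nat \<Rightarrow> real^'d) \<Rightarrow> bool" where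
  "mt_solution N \<kappa> h a x v \<longleftrightarrow>
     (\<forall>n. \<forall>i<N.
        x (Suc n) i = x n i + h *\<^sub>R v n i \<and>
        v (Suc n) i = v n i + (h * \<kappa>) *\<^sub>R (\<Sum>j<N. mt_phi N a x n i j *\<^sub>R (v n j - v n i)))"

definition frob :: "nat \<Rightarrow> (nat \<Rightarrow> nat \<Rightarrow> real^'d) \<Rightarrow> real" where
  "frob N D = sqrt (\<Sum>i<N. \<Sum>j<N. (norm (D i j))\<^sup>2)"

definition Delta :: "(nat \<Rightarrow> nat \<Rightarrow> real^'d) \<Rightarrow> nat \<Rightarrow> nat \<Rightarrow> nat \<Rightarrow> real^'d" where
  "Delta y n i j = y n i - y n j"

definition phi_lip :: "nat \<Rightarrow> real \<Rightarrow> real \<Rightarrow> real \<Rightarrow> real" where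
  "phi_lip N La c1 c2 = La / (real N * c1) * (1 + c2 / c1)"

definition Mconst :: "nat \<Rightarrow> real \<Rightarrow> real \<Rightarrow> real \<Rightarrow> real" where
  "Mconst N La c1 c2 = 1 / (4 * real N * phi_lip N La c1 c2)"

definition psi :: "nat \<Rightarrow> real \<Rightarrow> real \<Rightarrow> real \<Rightarrow> real \<Rightarrow> real" where
  "psi N La c1 c2 s = 1 - phi_lip N La c1 c2 * real N * s"

end

theory Submission
  imports Defs
begin



definition F2 :: "nat \<Rightarrow> (nat \<Rightarrow> 'v::real_normed_vector) \<Rightarrow> real" where
  "F2 N u = (\<Sum>i<N. \<Sum>j<N. (norm (u i - u j))\<^sup>2)"

lemma F2_nonneg: "0 \<le> F2 N u"
  unfolding F2_def by (intro sum_nonneg) auto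

lemma frob_L2: "frob N A = L2_set (\<lambda>p. norm (A (fst p) (snd p))) ({..<N} \<times> {..<N})"
  unfolding frob_def L2_set_def by (simp add: sum.cartesian_product case_prod_beta)

lemma frob_nonneg: "0 \<le> frob N A"
  unfolding frob_def by (intro real_sqrt_ge_zero sum_nonneg) auto

lemma frob_sq: "(frob N A)\<^sup>2 = (\<Sum>i<N. \<Sum>j<N. (norm (A i j))\<^sup>2)"
  unfolding frob_def by (simp add: sum_nonneg)

lemma frob_triangle: "frob N (\<lambda>i j. A i j + B i j) \<le> frob N A + frob N B"
proof -
  have "frob N (\<lambda>i j. A i j + B i j)
     \<le> L2_set (\<lambda>p. norm (A (fst p) (snd p)) + norm (B (fst p) (snd p))) ({..<N} \<times> {..<N})"
    unfolding frob_L2 by (rule L2_set_mono) (auto intro: norm_triangle_ineq)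
  also have "\<dots> \<le> frob N A + frob N B"
    unfolding frob_L2 by (rule L2_set_triangle_ineq)
  finally show ?thesis .
qed

lemma frob_scale: "frob N (\<lambda>i j. c *\<^sub>R A i j) = \<bar>c\<bar> * frob N A"
proof -
  have "frob N (\<lambda>i j. c *\<^sub>R A i j) = sqrt (c\<^sup>2 * (\<Sum>i<N. \<Sum>j<N. (norm (A i j))\<^sup>2))"
    unfolding frob_def by (simp add: power_mult_distrib sum_distrib_left)
  then show ?thesis unfolding frob_def by (simp add: real_sqrt_mult)
qed

lemma frob_Delta: "frob N (Delta y n) = sqrt (F2 N (y n))"
  unfolding frob_def F2_def Delta_def by simp

lemma frob_diff: "frob N (\<lambda>i j. u i - u j) = sqrt (F2 N u)"
  unfolding frob_def F2_def by simp

lemma cs_vec: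
  fixes y :: "nat \<Rightarrow> 'v::real_normed_vector"
  shows "(norm (\<Sum>k\<in>K. c k *\<^sub>R y k))\<^sup>2 \<le> (\<Sum>k\<in>K. (c k)\<^sup>2) * (\<Sum>k\<in>K. (norm (y k))\<^sup>2)"
proof -
  have "norm (\<Sum>k\<in>K. c k *\<^sub>R y k) \<le> (\<Sum>k\<in>K. \<bar>c k\<bar> * norm (y k))"
    by (rule order_trans[OF norm_sum]) simp
  then have "(norm (\<Sum>k\<in>K. c k *\<^sub>R y k))\<^sup>2 \<le> (\<Sum>k\<in>K. \<bar>c k\<bar> * norm (y k))\<^sup>2"
    by (intro power_mono) auto
  also have "\<dots> \<le> (\<Sum>k\<in>K. \<bar>c k\<bar>\<^sup>2) * (\<Sum>k\<in>K. (norm (y k))\<^sup>2)"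
    by (rule Cauchy_Schwarz_ineq_sum)
  finally show ?thesis by simp
qed

lemma diff_sq_sum:
  fixes g :: "nat \<Rightarrow> 'v::real_normed_vector"
  shows "(\<Sum>i<N. \<Sum>j<N. (norm (g i - g j))\<^sup>2) \<le> 4 * real N * (\<Sum>i<N. (norm (g i))\<^sup>2)"
proof -
  have le: "(norm (g i - g j))\<^sup>2 \<le> 2 * (norm (g i))\<^sup>2 + 2 * (norm (g j))\<^sup>2" for i j
  proof -
    have "norm (g i - g j) \<le> norm (g i) + norm (g j)" by (rule norm_triangle_ineq4)
    then have "(norm (g i - g j))\<^sup>2 \<le> (norm (g i) + norm (g j))\<^sup>2" by (intro power_mono) auto
    also have "\<dots> \<le> 2 * (norm (g i))\<^sup>2 + 2 * (norm (g j))\<^sup>2"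
      by (smt (verit) power2_sum sum_squares_bound)
    finally show ?thesis .
  qed
  have "(\<Sum>i<N. \<Sum>j<N. (norm (g i - g j))\<^sup>2) \<le> (\<Sum>i<N. \<Sum>j<N. 2 * (norm (g i))\<^sup>2 + 2 * (norm (g j))\<^sup>2)"
    by (intro sum_mono le)
  also have "\<dots> = 4 * real N * (\<Sum>i<N. (norm (g i))\<^sup>2)"
    by (simp add: sum.distrib sum_distrib_left[symmetric] algebra_simps)
  finally show ?thesis .
qed


lemma centered_cs:
  fixes u :: "nat \<Rightarrow> 'v::real_normed_vector"
  assumes "(\<Sum>k<N. d k) = 0"
  shows "real N * (norm (\<Sum>k<N. d k *\<^sub>R u k))\<^sup>2 \<le> (\<Sum>k<N. (d k)\<^sup>2) * F2 N u"
proof -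
  have eq: "(\<Sum>k<N. d k *\<^sub>R u k) = (\<Sum>k<N. d k *\<^sub>R (u k - u l))" for l
  proof -
    have "(\<Sum>k<N. d k *\<^sub>R (u k - u l)) = (\<Sum>k<N. d k *\<^sub>R u k) - (\<Sum>k<N. d k) *\<^sub>R u l"
      by (simp add: scaleR_diff_right sum_subtractf scaleR_sum_left)
    then show ?thesis using assms by simp
  qed
  have "(norm (\<Sum>k<N. d k *\<^sub>R u k))\<^sup>2 \<le> (\<Sum>k<N. (d k)\<^sup>2) * (\<Sum>k<N. (norm (u l - u k))\<^sup>2)" for l
    unfolding eq[of l] using cs_vec[of d "\<lambda>k. u k - u l" "{..<N}"] by (simp add: norm_minus_commute)
  then have "(\<Sum>l<N. (norm (\<Sum>k<N. d k *\<^sub>R u k))\<^sup>2) \<le> (\<Sum>l<N. (\<Sum>k<N. (d k)\<^sup>2) * (\<Sum>k<N. (norm (u l - u k))\<^sup>2))"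
    by (intro sum_mono) auto
  then show ?thesis by (simp add: F2_def sum_distrib_left)
qed

lemma contract:
  fixes u :: "nat \<Rightarrow> real^'d" and p :: "nat \<Rightarrow> nat \<Rightarrow> real"
  assumes N: "N \<ge> 1" and rows: "\<And>i. i < N \<Longrightarrow> (\<Sum>k<N. p i k) = 1" and t: "0 \<le> t" "t \<le> 1"
  shows "frob N (\<lambda>i j. (u i + t *\<^sub>R (\<Sum>k<N. p i k *\<^sub>R (u k - u i))) - (u j + t *\<^sub>R (\<Sum>k<N. p j k *\<^sub>R (u k - u j))))
     \<le> (1 - t + 2 * t * sqrt (\<Sum>i<N. \<Sum>k<N. (p i k - 1 / real N)\<^sup>2)) * sqrt (F2 N u)"
proof -
  define d where "d i k = p i k - 1 / real N" for i k
  define g where "g i = (\<Sum>k<N. d i k *\<^sub>R u k)" for i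
  define ub where "ub = (1 / real N) *\<^sub>R (\<Sum>k<N. u k)"
  have T: "u i + t *\<^sub>R (\<Sum>k<N. p i k *\<^sub>R (u k - u i)) = (1 - t) *\<^sub>R u i + t *\<^sub>R ub + t *\<^sub>R g i"
    if "i < N" for i
  proof -
    have "(\<Sum>k<N. p i k *\<^sub>R (u k - u i)) = (\<Sum>k<N. p i k *\<^sub>R u k) - (\<Sum>k<N. p i k) *\<^sub>R u i"
      by (simp add: scaleR_diff_right sum_subtractf scaleR_sum_left)
    also have "(\<Sum>k<N. p i k *\<^sub>R u k) = g i + ub"
      unfolding g_def ub_def d_def by (simp add: scaleR_diff_left sum_subtractf scaleR_sum_right)
    finally have S: "(\<Sum>k<N. p i k *\<^sub>R (u k - u i)) = g i + ub - u i"
      using rows[OF that] by simp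
    show ?thesis unfolding S by (simp add: algebra_simps)
  qed
  have "frob N (\<lambda>i j. (u i + t *\<^sub>R (\<Sum>k<N. p i k *\<^sub>R (u k - u i))) - (u j + t *\<^sub>R (\<Sum>k<N. p j k *\<^sub>R (u k - u j))))
      = frob N (\<lambda>i j. (1 - t) *\<^sub>R (u i - u j) + t *\<^sub>R (g i - g j))"
    unfolding frob_def by (intro arg_cong[where f=sqrt] sum.cong refl) (simp only: T lessThan_iff, simp add: algebra_simps)
  also have "\<dots> \<le> frob N (\<lambda>i j. (1 - t) *\<^sub>R (u i - u j)) + frob N (\<lambda>i j. t *\<^sub>R (g i - g j))"
    by (rule frob_triangle)
  also have "\<dots> = (1 - t) * sqrt (F2 N u) + t * frob N (\<lambda>i j. g i - g j)"
    using t by (simp add: frob_scale frob_diff)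
  also have "frob N (\<lambda>i j. g i - g j) \<le> 2 * sqrt (\<Sum>i<N. \<Sum>k<N. (d i k)\<^sup>2) * sqrt (F2 N u)"
  proof -
    have "real N * (\<Sum>i<N. (norm (g i))\<^sup>2) \<le> (\<Sum>i<N. (\<Sum>k<N. (d i k)\<^sup>2) * F2 N u)"
      unfolding sum_distrib_left
    proof (intro sum_mono)
      fix i assume "i \<in> {..<N}"
      have "(\<Sum>k<N. d i k) = 0" using rows[of i] \<open>i \<in> {..<N}\<close> N
        by (simp add: d_def sum_subtractf)
      then show "real N * (norm (g i))\<^sup>2 \<le> (\<Sum>k<N. (d i k)\<^sup>2) * F2 N u"
        unfolding g_def by (rule centered_cs)
    qed
    then have "4 * real N * (\<Sum>i<N. (norm (g i))\<^sup>2) \<le> 4 * ((\<Sum>i<N. \<Sum>k<N. (d i k)\<^sup>2) * F2 N u)"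
      by (simp add: sum_distrib_right)
    with diff_sq_sum[of g N] have "(frob N (\<lambda>i j. g i - g j))\<^sup>2 \<le> (2 * sqrt (\<Sum>i<N. \<Sum>k<N. (d i k)\<^sup>2) * sqrt (F2 N u))\<^sup>2"
      by (simp add: frob_sq power_mult_distrib sum_nonneg F2_nonneg)
    then show ?thesis
      by (rule power2_le_imp_le) (simp add: sum_nonneg F2_nonneg)
  qed
  then have "t * frob N (\<lambda>i j. g i - g j) \<le> t * (2 * sqrt (\<Sum>i<N. \<Sum>k<N. (d i k)\<^sup>2) * sqrt (F2 N u))"
    using t by (intro mult_left_mono) auto
  finally show ?thesis by (simp add: d_def algebra_simps)
qed


lemma S_pos:
  assumes N: "N \<ge> 1" and c1: "0 < c1" and ha: "\<And>r. r \<ge> 0 \<Longrightarrow> c1 \<le> a r \<and> a r \<le> c2"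
  shows "real N * c1 \<le> (\<Sum>k<N. a (norm (y i - y k :: real^'d)))"
proof -
  have "(\<Sum>k<N. c1) \<le> (\<Sum>k<N. a (norm (y i - y k)))"
    by (intro sum_mono) (use ha in auto)
  then show ?thesis by simp
qed

lemma phi_rows:
  assumes N: "N \<ge> 1" and c1: "0 < c1" and ha: "\<And>r. r \<ge> 0 \<Longrightarrow> c1 \<le> a r \<and> a r \<le> c2"
  shows "(\<Sum>j<N. mt_phi N a x n i j) = 1"
proof -
  have "real N * c1 \<le> (\<Sum>k<N. a (norm (x n i - x n k)))" by (rule S_pos[OF N c1 ha])
  moreover have "real N * c1 > 0" using N c1 by simp
  ultimately have "(\<Sum>k<N. a (norm (x n i - x n k))) \<noteq> 0" by linarith
  then show ?thesis unfolding mt_phi_def by (simp add: sum_divide_distrib[symmetric])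
qed

lemma phi_dev:
  assumes N: "N \<ge> 1" and c1: "0 < c1" and ha: "\<And>r. r \<ge> 0 \<Longrightarrow> c1 \<le> a r \<and> a r \<le> c2"
    and hL: "\<And>r1 r2. r1 \<ge> 0 \<Longrightarrow> r2 \<ge> 0 \<Longrightarrow> \<bar>a r1 - a r2\<bar> \<le> La * \<bar>r1 - r2\<bar>"
    and La: "La \<ge> 0"
  shows "(\<Sum>i<N. \<Sum>j<N. (mt_phi N a x n i j - 1 / real N)\<^sup>2) \<le> (La / (real N * c1))\<^sup>2 * F2 N (x n)"
proof -
  define y where "y = x n"
  define r where "r j k = norm (y j - y k)" for j k
  define B where "B = La / (real N * real N * c1)"
  have Npos: "real N > 0" using N by simp
  have B0: "B \<ge> 0" using La c1 N by (simp add: B_def)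
  have each: "(mt_phi N a x n i j - 1 / real N)\<^sup>2 \<le> B\<^sup>2 * (real N * (\<Sum>k<N. (r j k)\<^sup>2))"
    if "i < N" "j < N" for i j
  proof -
    define S where "S = (\<Sum>k<N. a (norm (y i - y k)))"
    have S: "real N * c1 \<le> S" unfolding S_def by (rule S_pos[OF N c1 ha])
    have Sp: "S > 0" using S Npos c1 by (smt (verit) mult_pos_pos)
    have "mt_phi N a x n i j - 1 / real N = (real N * a (norm (y i - y j)) - S) / (real N * S)"
      unfolding mt_phi_def y_def[symmetric] S_def[symmetric] using Sp Npos
      by (simp add: field_simps)
    also have "real N * a (norm (y i - y j)) - S = (\<Sum>k<N. a (norm (y i - y j)) - a (norm (y i - y k)))"
      unfolding S_def by (simp add: sum_subtractf)
    finally have eq: "mt_phi N a x n i j - 1 / real N = (\<Sum>k<N. a (norm (y i - y j)) - a (norm (y i - y k))) / (real N * S)" .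
    have num: "\<bar>\<Sum>k<N. a (norm (y i - y j)) - a (norm (y i - y k))\<bar> \<le> La * (\<Sum>k<N. r j k)"
    proof -
      have "\<bar>\<Sum>k<N. a (norm (y i - y j)) - a (norm (y i - y k))\<bar> \<le> (\<Sum>k<N. \<bar>a (norm (y i - y j)) - a (norm (y i - y k))\<bar>)"
        by (rule sum_abs)
      also have "\<dots> \<le> (\<Sum>k<N. La * r j k)"
      proof (intro sum_mono)
        fix k
        have "\<bar>a (norm (y i - y j)) - a (norm (y i - y k))\<bar> \<le> La * \<bar>norm (y i - y j) - norm (y i - y k)\<bar>"
          by (rule hL) auto
        also have "\<bar>norm (y i - y j) - norm (y i - y k)\<bar> \<le> norm ((y i - y j) - (y i - y k))"
          by (rule norm_triangle_ineq3)
        also have "norm ((y i - y j) - (y i - y k)) = r j k"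
          unfolding r_def by (simp add: norm_minus_commute)
        finally show "\<bar>a (norm (y i - y j)) - a (norm (y i - y k))\<bar> \<le> La * r j k"
          using La by (simp add: mult_left_mono)
      qed
      finally show ?thesis by (simp add: sum_distrib_left)
    qed
    have "\<bar>mt_phi N a x n i j - 1 / real N\<bar> \<le> La * (\<Sum>k<N. r j k) / (real N * (real N * c1))"
    proof -
      have "\<bar>mt_phi N a x n i j - 1 / real N\<bar> = \<bar>\<Sum>k<N. a (norm (y i - y j)) - a (norm (y i - y k))\<bar> / (real N * S)"
        unfolding eq using Sp Npos by (simp add: abs_divide)
      also have "\<dots> \<le> La * (\<Sum>k<N. r j k) / (real N * S)"
        using num Sp Npos by (simp add: divide_right_mono)
      also have "\<dots> \<le> La * (\<Sum>k<N. r j k) / (real N * (real N * c1))"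
        using S Npos c1 La Sp by (intro divide_left_mono mult_left_mono mult_nonneg_nonneg sum_nonneg mult_pos_pos)
           (auto simp: r_def)
      finally show ?thesis .
    qed
    then have "\<bar>mt_phi N a x n i j - 1 / real N\<bar> \<le> B * (\<Sum>k<N. r j k)"
      by (simp add: B_def)
    then have "(mt_phi N a x n i j - 1 / real N)\<^sup>2 \<le> (B * (\<Sum>k<N. r j k))\<^sup>2"
      by (metis abs_ge_zero power2_abs power_mono)
    also have "\<dots> = B\<^sup>2 * (\<Sum>k<N. 1 * r j k)\<^sup>2" by (simp add: power_mult_distrib)
    also have "\<dots> \<le> B\<^sup>2 * ((\<Sum>k<N. 1\<^sup>2) * (\<Sum>k<N. (r j k)\<^sup>2))"
      by (intro mult_left_mono Cauchy_Schwarz_ineq_sum) auto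
    finally show ?thesis by simp
  qed
  have "(\<Sum>i<N. \<Sum>j<N. (mt_phi N a x n i j - 1 / real N)\<^sup>2) \<le> (\<Sum>i<N. \<Sum>j<N. B\<^sup>2 * (real N * (\<Sum>k<N. (r j k)\<^sup>2)))"
    by (intro sum_mono each) auto
  also have "\<dots> = real N * (B\<^sup>2 * (real N * F2 N (x n)))"
    by (simp add: F2_def r_def y_def sum_distrib_left)
  also have "\<dots> = (La / (real N * c1))\<^sup>2 * F2 N (x n)"
    unfolding B_def using Npos by (simp add: power2_eq_square field_simps)
  finally show ?thesis .
qed


lemma E_bound:
  fixes v :: "nat \<Rightarrow> real^'d" and q :: "nat \<Rightarrow> nat \<Rightarrow> real"
  shows "(frob N (\<lambda>i j. (\<Sum>k<N. q i k *\<^sub>R (v k - v i)) - (\<Sum>k<N. q j k *\<^sub>R (v k - v j))))\<^sup>2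
     \<le> 4 * real N * ((\<Sum>i<N. \<Sum>k<N. (q i k)\<^sup>2) * F2 N v)"
proof -
  define e where "e i = (\<Sum>k<N. q i k *\<^sub>R (v k - v i))" for i
  define B where "B i = (\<Sum>k<N. (norm (v i - v k))\<^sup>2)" for i
  have B0: "B i \<ge> 0" for i unfolding B_def by (intro sum_nonneg) auto
  have BF: "B i \<le> F2 N v" if "i < N" for i
    unfolding F2_def B_def[symmetric] using that B0 by (intro member_le_sum) auto
  have "(\<Sum>i<N. (norm (e i))\<^sup>2) \<le> (\<Sum>i<N. (\<Sum>k<N. (q i k)\<^sup>2) * B i)"
  proof (intro sum_mono)
    fix i
    show "(norm (e i))\<^sup>2 \<le> (\<Sum>k<N. (q i k)\<^sup>2) * B i"
      unfolding e_def B_def using cs_vec[of "q i" "\<lambda>k. v k - v i" "{..<N}"]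
      by (simp add: norm_minus_commute)
  qed
  also have "\<dots> \<le> (\<Sum>i<N. (\<Sum>k<N. (q i k)\<^sup>2) * F2 N v)"
    by (intro sum_mono mult_left_mono BF sum_nonneg) auto
  finally have "(\<Sum>i<N. (norm (e i))\<^sup>2) \<le> (\<Sum>i<N. \<Sum>k<N. (q i k)\<^sup>2) * F2 N v"
    by (simp add: sum_distrib_right)
  with diff_sq_sum[of e N] show ?thesis
    unfolding frob_sq e_def[symmetric]
    by (smt (verit) mult_left_mono of_nat_0_le_iff)
qed

lemma flock:
  fixes X V :: "nat \<Rightarrow> real"
  assumes M: "M > 0" and k: "\<kappa> > 0" and h: "h > 0" and t: "h * \<kappa> < 1"
    and X0: "\<And>n. X n \<ge> 0" and V0: "\<And>n. V n \<ge> 0"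
    and sX: "\<And>n. X (Suc n) \<le> X n + h * V n"
    and sV: "\<And>n. X n < M \<Longrightarrow> V (Suc n) \<le> (1 - h * \<kappa> + h * \<kappa> * X n / (4 * M)) * V n"
    and iX: "X 0 < M"
    and iV: "V 0 < \<kappa> * ((M - M\<^sup>2 / (8 * M)) - (X 0 - (X 0)\<^sup>2 / (8 * M)))"
  shows "X n < M"
proof -
  define G where "G s = s - s\<^sup>2 / (8 * M)" for s
  define L0 where "L0 = V 0 + \<kappa> * G (X 0)"
  have GM: "G M \<le> M" using M by (simp add: G_def)
  have Gnn: "G s \<ge> 0" if "0 \<le> s" "s \<le> M" for s
  proof -
    have "s\<^sup>2 / (8 * M) \<le> s" using that M
      by (simp add: power2_eq_square divide_le_eq) (smt (verit) mult_left_mono)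
    then show ?thesis by (simp add: G_def)
  qed
  have Gdiff: "G M - G y = (M - y) * (7 * M - y) / (8 * M)" for y
    unfolding G_def using M by (simp add: field_simps power2_eq_square)
  have Gconc: "G y - G x = (1 - x / (4 * M)) * (y - x) - (y - x)\<^sup>2 / (8 * M)" for x y
    unfolding G_def using M by (simp add: field_simps power2_eq_square)
  have L0lt: "L0 < \<kappa> * G M" using iV by (simp add: L0_def G_def algebra_simps)
  have "X n < M \<and> V n + \<kappa> * G (X n) \<le> L0" for n
  proof (induction n)
    case 0 then show ?case using iX by (simp add: L0_def)
  next
    case (Suc n)
    then have Xn: "X n < M" and Ln: "V n + \<kappa> * G (X n) \<le> L0" by auto
    define p where "p = 1 - X n / (4 * M)"
    have p0: "p \<ge> 0" using Xn X0[of n] M by (simp add: p_def field_simps)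
    have V1: "V (Suc n) \<le> V n - h * \<kappa> * p * V n"
      using sV[OF Xn] M by (simp add: p_def algebra_simps)
    have "G (X (Suc n)) - G (X n) \<le> p * (X (Suc n) - X n)"
      unfolding Gconc p_def[symmetric] using M by simp
    also have "\<dots> \<le> p * (h * V n)"
      using sX[of n] p0 by (intro mult_left_mono) auto
    finally have G1: "\<kappa> * G (X (Suc n)) \<le> \<kappa> * G (X n) + \<kappa> * (p * (h * V n))"
      using k by (smt (verit) mult_left_mono distrib_left)
    have Lnext: "V (Suc n) + \<kappa> * G (X (Suc n)) \<le> L0"
      using V1 G1 Ln by (simp add: algebra_simps)
    have "\<kappa> * G (X n) \<ge> 0" using Gnn[of "X n"] X0[of n] Xn k by simp
    then have "V n \<le> L0" using Ln by linarith
    also have "L0 < \<kappa> * M" using L0lt GM k by (smt (verit) mult_left_mono)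
    finally have "h * V n < h * (\<kappa> * M)" using h by simp
    also have "\<dots> < M" using t M by (simp add: mult.assoc[symmetric])
    finally have X2: "X (Suc n) < 2 * M" using sX[of n] Xn by simp
    have "\<kappa> * G (X (Suc n)) < \<kappa> * G M" using Lnext L0lt V0[of "Suc n"] by linarith
    then have "G (X (Suc n)) < G M" using k by simp
    then have "0 < (M - X (Suc n)) * (7 * M - X (Suc n)) / (8 * M)" using Gdiff[of "X (Suc n)"] by simp
    then have "0 < (M - X (Suc n)) * (7 * M - X (Suc n))" using M by (simp add: zero_less_divide_iff)
    moreover have "7 * M - X (Suc n) > 0" using X2 M by simp
    ultimately have "X (Suc n) < M" by (simp add: zero_less_mult_iff)
    then show ?case using Lnext by simp
  qed
  then show ?thesis by simp
qed



lemma final_alg: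
  fixes N t X V R rho eps mu al :: real
  assumes N: "N \<ge> 2" and t: "0 < t" "t < 1" and XV: "X \<ge> 0" "V \<ge> 0"
    and R: "0 \<le> R" "R \<le> rho * X + eps * V"
    and rho: "0 \<le> rho" "rho \<le> 1 - t + t / (4 * N)"
    and eps: "0 \<le> eps" "eps\<^sup>2 \<le> t\<^sup>2 / 8"
    and mu: "mu \<ge> 1 - 2 * t / N" and al: "al \<ge> 0"
  shows "R\<^sup>2 \<le> (mu\<^sup>2 + 4 * t\<^sup>2 * (al + 1 / (16 * N)) + 2 * sqrt 2 * t * mu * sqrt (al + 1 / 16)) * X\<^sup>2
              + 2 * t * mu * X * V + 2 * t\<^sup>2 * V\<^sup>2"
proof -
  define m where "m = 1 - 2 * t / N"
  have Npos: "N > 0" using N by simp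
  have m0: "m \<ge> 1 - t"
  proof -
    have "2 * t / N \<le> t" using N t by (simp add: divide_le_eq)
    then show ?thesis by (simp add: m_def)
  qed
  have mm1: "0 \<le> m" using m0 t by linarith
  have mm2: "m \<le> mu" using mu unfolding m_def by linarith
  note mm = mm1 mm2
  have epst: "eps \<le> t / 2"
  proof -
    have "eps\<^sup>2 \<le> (t / 2)\<^sup>2"
    proof -
      have "0 \<le> eps\<^sup>2" by simp
      moreover have "(t / 2)\<^sup>2 = t\<^sup>2 / 4" by (simp add: power_divide)
      ultimately show ?thesis using eps(2) by linarith
    qed
    then show ?thesis by (rule power2_le_imp_le) (use t in simp)
  qed
  have s2: "sqrt 2 \<ge> 1" by simp
  have s16: "sqrt (al + 1 / 16) \<ge> 1 / 4"
  proof -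
    have "sqrt (1/16) \<le> sqrt (al + 1 / 16)" using al by (intro real_sqrt_le_mono) auto
    moreover have "sqrt (1/16::real) = 1/4" by (simp add: real_sqrt_divide)
    ultimately show ?thesis by simp
  qed
  have "sqrt 2 * sqrt (al + 1 / 16) \<ge> 1 * (1 / 4)"
    using s2 s16 by (intro mult_mono) auto
  then have cross0: "t * mu * (1 / 2) \<le> t * mu * (2 * (sqrt 2 * sqrt (al + 1 / 16)))"
    using t mm by (intro mult_left_mono) auto
  have cross: "2 * sqrt 2 * t * mu * sqrt (al + 1 / 16) \<ge> t * mu / 2"
    using cross0 by (simp add: algebra_simps)
  have t4: "4 * t\<^sup>2 * (al + 1 / (16 * N)) \<ge> t\<^sup>2 / (4 * N)"
    using al Npos by (simp add: field_simps)
  have RHS: "(mu\<^sup>2 + t\<^sup>2 / (4 * N) + t * mu / 2) * X\<^sup>2 + 2 * t * mu * X * V + 2 * t\<^sup>2 * V\<^sup>2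
     \<le> (mu\<^sup>2 + 4 * t\<^sup>2 * (al + 1 / (16 * N)) + 2 * sqrt 2 * t * mu * sqrt (al + 1 / 16)) * X\<^sup>2
              + 2 * t * mu * X * V + 2 * t\<^sup>2 * V\<^sup>2"
  proof -
    have "mu\<^sup>2 + t\<^sup>2 / (4 * N) + t * mu / 2 \<le> mu\<^sup>2 + 4 * t\<^sup>2 * (al + 1 / (16 * N)) + 2 * sqrt 2 * t * mu * sqrt (al + 1 / 16)"
      using cross t4 by linarith
    then have "(mu\<^sup>2 + t\<^sup>2 / (4 * N) + t * mu / 2) * X\<^sup>2 \<le> (mu\<^sup>2 + 4 * t\<^sup>2 * (al + 1 / (16 * N)) + 2 * sqrt 2 * t * mu * sqrt (al + 1 / 16)) * X\<^sup>2"
      by (rule mult_right_mono) simp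
    then show ?thesis by linarith
  qed
  have RHSm: "(m\<^sup>2 + t\<^sup>2 / (4 * N) + t * m / 2) * X\<^sup>2 + 2 * t * m * X * V + 2 * t\<^sup>2 * V\<^sup>2
     \<le> (mu\<^sup>2 + t\<^sup>2 / (4 * N) + t * mu / 2) * X\<^sup>2 + 2 * t * mu * X * V + 2 * t\<^sup>2 * V\<^sup>2"
  proof -
    have "m\<^sup>2 \<le> mu\<^sup>2" using mm by (intro power_mono) auto
    moreover have "t * m \<le> t * mu" using mm t by simp
    ultimately have A: "(m\<^sup>2 + t\<^sup>2 / (4 * N) + t * m / 2) * X\<^sup>2 \<le> (mu\<^sup>2 + t\<^sup>2 / (4 * N) + t * mu / 2) * X\<^sup>2"
      by (intro mult_right_mono) auto
    have "(2 * t * (X * V)) * m \<le> (2 * t * (X * V)) * mu"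
      using mm t XV by (intro mult_left_mono) auto
    then have B: "2 * t * m * X * V \<le> 2 * t * mu * X * V" by (simp add: ac_simps)
    show ?thesis using A B by linarith
  qed
  have LHS: "R\<^sup>2 \<le> rho\<^sup>2 * X\<^sup>2 + 2 * rho * eps * X * V + eps\<^sup>2 * V\<^sup>2"
  proof -
    have "R\<^sup>2 \<le> (rho * X + eps * V)\<^sup>2" using R by (intro power_mono) auto
    then show ?thesis by (simp add: power2_eq_square algebra_simps)
  qed
  have e2: "eps\<^sup>2 * V\<^sup>2 \<le> (t\<^sup>2 / 4) * V\<^sup>2"
  proof -
    have "eps\<^sup>2 \<le> t\<^sup>2 / 4" using eps(2) zero_le_power2[of eps] zero_le_power2[of t] by linarith
    then show ?thesis by (rule mult_right_mono) simp
  qed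
  have XVn: "X * V \<ge> 0" using XV by simp
  show ?thesis
  proof (cases "N \<ge> 3")
    case True
    have "rho \<le> m"
    proof -
      have e9: "t / (4 * N) + 2 * t / N = (9 * t) / (4 * N)" using Npos by (simp add: field_simps)
      have "t * 9 \<le> t * (4 * N)" using True t by (intro mult_left_mono) auto
      then have "(9 * t) / (4 * N) \<le> t" using Npos by (simp add: divide_le_eq mult.commute)
      then have "t / (4 * N) + 2 * t / N \<le> t" using e9 by simp
      then show ?thesis using rho unfolding m_def by linarith
    qed
    then have "rho\<^sup>2 \<le> m\<^sup>2" using rho by (intro power_mono) auto
    moreover have "2 * rho * eps \<le> 2 * t * m"
    proof -
      have "rho * eps \<le> m * (t / 2)" using \<open>rho \<le> m\<close> epst rho eps by (intro mult_mono) auto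
      moreover have "0 \<le> m * t" using mm1 t by simp
      ultimately show ?thesis by (simp add: algebra_simps)
    qed
    ultimately have A1: "rho\<^sup>2 * X\<^sup>2 \<le> (m\<^sup>2 + t\<^sup>2 / (4 * N) + t * m / 2) * X\<^sup>2"
      and B1: "2 * rho * eps * (X * V) \<le> 2 * t * m * (X * V)"
    proof -
      assume a1: "rho\<^sup>2 \<le> m\<^sup>2" and b1: "2 * rho * eps \<le> 2 * t * m"
      have "0 \<le> t\<^sup>2 / (4 * N)" using Npos by simp
      moreover have "0 \<le> t * m" using t mm1 by simp
      ultimately have "0 \<le> t\<^sup>2 / (4 * N) + t * m / 2" by linarith
      then have "rho\<^sup>2 \<le> m\<^sup>2 + t\<^sup>2 / (4 * N) + t * m / 2" using a1 by linarith
      then show "rho\<^sup>2 * X\<^sup>2 \<le> (m\<^sup>2 + t\<^sup>2 / (4 * N) + t * m / 2) * X\<^sup>2"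
        by (rule mult_right_mono) simp
      show "2 * rho * eps * (X * V) \<le> 2 * t * m * (X * V)"
        using b1 XVn by (rule mult_right_mono)
    qed
    have "t\<^sup>2 / 4 * V\<^sup>2 \<le> 2 * t\<^sup>2 * V\<^sup>2" by (rule mult_right_mono) auto
    then have "eps\<^sup>2 * V\<^sup>2 \<le> 2 * t\<^sup>2 * V\<^sup>2" using e2 by linarith
    then have "rho\<^sup>2 * X\<^sup>2 + 2 * rho * eps * X * V + eps\<^sup>2 * V\<^sup>2
        \<le> (m\<^sup>2 + t\<^sup>2 / (4 * N) + t * m / 2) * X\<^sup>2 + 2 * t * m * X * V + 2 * t\<^sup>2 * V\<^sup>2"
      using A1 B1 by (simp add: ac_simps)
    then show ?thesis using LHS RHS RHSm by linarith
  next
    case False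
    then have N2: "N < 3" by simp
    have "rho \<le> 1 - t + t / 8"
    proof -
      have "t / (4 * N) \<le> t / 8" using N t by (intro divide_left_mono) auto
      then show ?thesis using rho by linarith
    qed
    have "m \<ge> 1 - t" by (rule m0)
    have "2 * rho * eps \<le> 2 * t * m + t\<^sup>2 / 8"
    proof -
      have "rho * eps \<le> (1 - t + t / 8) * (t / 2)" using \<open>rho \<le> 1 - t + t / 8\<close> epst rho eps
        by (intro mult_mono) auto
      moreover have "t * (1 - t) \<le> t * m" using m0 t by simp
      moreover have "t * t \<le> t * 1" using t by (intro mult_left_mono) auto
      ultimately show ?thesis by (simp add: power2_eq_square algebra_simps)
    qed
    then have "2 * rho * eps * (X * V) \<le> (2 * t * m + t\<^sup>2 / 8) * (X * V)"
      using XVn by (rule mult_right_mono)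
    then have "2 * rho * eps * X * V \<le> (2 * t * m + t\<^sup>2 / 8) * X * V"
      by (simp add: mult.assoc)
    also have "\<dots> = 2 * t * m * X * V + t\<^sup>2 / 8 * (X * V)" by (simp add: algebra_simps)
    also have "t\<^sup>2 / 8 * (X * V) \<le> t\<^sup>2 / 16 * (X\<^sup>2 + V\<^sup>2)"
    proof -
      have "0 \<le> (X - V)\<^sup>2" by simp
      then have "2 * (X * V) \<le> X\<^sup>2 + V\<^sup>2" by (simp add: power2_diff)
      then have "t\<^sup>2 / 16 * (2 * (X * V)) \<le> t\<^sup>2 / 16 * (X\<^sup>2 + V\<^sup>2)" by (intro mult_left_mono) auto
      then show ?thesis by simp
    qed
    finally have c: "2 * rho * eps * X * V \<le> 2 * t * m * X * V + t\<^sup>2 / 16 * (X\<^sup>2 + V\<^sup>2)" by simp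
    have "rho\<^sup>2 \<le> (1 - t + t / 8)\<^sup>2" using rho \<open>rho \<le> 1 - t + t / 8\<close> by (intro power_mono) auto
    moreover have "(1 - t + t / 8)\<^sup>2 + t\<^sup>2 / 16 \<le> (1 - t)\<^sup>2 + t\<^sup>2 / 12 + t * (1 - t) / 2"
    proof -
      have "0 \<le> t * (48 - 47 * t)" using t by simp
      then show ?thesis by (simp add: power2_eq_square field_simps)
    qed
    moreover have "(1 - t)\<^sup>2 + t * (1 - t) / 2 \<le> m\<^sup>2 + t * m / 2"
    proof -
      have "(1 - t)\<^sup>2 \<le> m\<^sup>2" using m0 t by (intro power_mono) auto
      moreover have "t * (1 - t) \<le> t * m" using m0 t by simp
      ultimately show ?thesis by simp
    qed
    moreover have "t\<^sup>2 / (4 * N) \<ge> t\<^sup>2 / 12" using N2 N by (intro divide_left_mono) auto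
    ultimately have a: "rho\<^sup>2 + t\<^sup>2 / 16 \<le> m\<^sup>2 + t\<^sup>2 / (4 * N) + t * m / 2" by linarith
    have "rho\<^sup>2 * X\<^sup>2 + 2 * rho * eps * X * V + eps\<^sup>2 * V\<^sup>2
        \<le> (rho\<^sup>2 + t\<^sup>2 / 16) * X\<^sup>2 + 2 * t * m * X * V + (t\<^sup>2 / 4 + t\<^sup>2 / 16) * V\<^sup>2"
    proof -
      have d1: "(rho\<^sup>2 + t\<^sup>2 / 16) * X\<^sup>2 = rho\<^sup>2 * X\<^sup>2 + t\<^sup>2 / 16 * X\<^sup>2" by (simp add: distrib_right)
      have d2: "(t\<^sup>2 / 4 + t\<^sup>2 / 16) * V\<^sup>2 = t\<^sup>2 / 4 * V\<^sup>2 + t\<^sup>2 / 16 * V\<^sup>2" by (simp add: distrib_right)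
      have d3: "t\<^sup>2 / 16 * (X\<^sup>2 + V\<^sup>2) = t\<^sup>2 / 16 * X\<^sup>2 + t\<^sup>2 / 16 * V\<^sup>2" by (simp add: distrib_left)
      show ?thesis using c e2 d1 d2 d3 by linarith
    qed
    also have "\<dots> \<le> (m\<^sup>2 + t\<^sup>2 / (4 * N) + t * m / 2) * X\<^sup>2 + 2 * t * m * X * V + 2 * t\<^sup>2 * V\<^sup>2"
    proof -
      have q1: "(rho\<^sup>2 + t\<^sup>2 / 16) * X\<^sup>2 \<le> (m\<^sup>2 + t\<^sup>2 / (4 * N) + t * m / 2) * X\<^sup>2"
        using a by (rule mult_right_mono) simp
      have "t\<^sup>2 / 4 + t\<^sup>2 / 16 \<le> 2 * t\<^sup>2" using zero_le_power2[of t] by linarith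
      then have q2: "(t\<^sup>2 / 4 + t\<^sup>2 / 16) * V\<^sup>2 \<le> 2 * t\<^sup>2 * V\<^sup>2"
        by (rule mult_right_mono) simp
      show ?thesis using q1 q2 by linarith
    qed
    finally show ?thesis using LHS RHS RHSm by linarith
  qed
qed


lemma integral_psi:
  fixes P M N :: real
  assumes "4 * M * P = 1" "M > 0" "b \<le> M"
  shows "integral {b..M} (\<lambda>s. 1 - P * s) = (M - M\<^sup>2 / (8 * M)) - (b - b\<^sup>2 / (8 * M))"
proof -
  have "((\<lambda>s. 1 - P * s) has_integral (M - M\<^sup>2 / (8 * M)) - (b - b\<^sup>2 / (8 * M))) {b..M}"
  proof (rule fundamental_theorem_of_calculus[OF assms(3)])
    fix s assume "s \<in> {b..M}"
    have "((\<lambda>s. s - s\<^sup>2 / (8 * M)) has_real_derivative (1 - 2 * s / (8 * M))) (at s within {b..M})"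
      using assms(2) by (auto intro!: derivative_eq_intros)
    moreover have "1 - 2 * s / (8 * M) = 1 - P * s"
      using assms by (simp add: field_simps)
    ultimately show "((\<lambda>s. s - s\<^sup>2 / (8 * M)) has_vector_derivative (1 - P * s)) (at s within {b..M})"
      by (simp add: has_real_derivative_iff_has_vector_derivative)
  qed
  then show ?thesis by (rule integral_unique)
qed



lemma frob_cong:
  assumes "\<And>i j. i < N \<Longrightarrow> j < N \<Longrightarrow> A i j = B i j"
  shows "frob N A = frob N B"
  unfolding frob_def using assms by (intro arg_cong[where f=sqrt] sum.cong refl) auto

lemma step_x:
  assumes sol: "mt_solution N \<kappa> h a x v" and h: "h \<ge> 0"
  shows "sqrt (F2 N (x (Suc n))) \<le> sqrt (F2 N (x n)) + h * sqrt (F2 N (v n))"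
proof -
  have "sqrt (F2 N (x (Suc n))) = frob N (\<lambda>i j. (x n i - x n j) + h *\<^sub>R (v n i - v n j))"
    unfolding frob_diff[symmetric] using sol unfolding mt_solution_def
    by (intro frob_cong) (simp add: algebra_simps)
  also have "\<dots> \<le> frob N (\<lambda>i j. x n i - x n j) + frob N (\<lambda>i j. h *\<^sub>R (v n i - v n j))"
    by (rule frob_triangle)
  also have "\<dots> = sqrt (F2 N (x n)) + h * sqrt (F2 N (v n))"
    using h by (simp add: frob_scale frob_diff)
  finally show ?thesis .
qed

lemma step_v:
  assumes sol: "mt_solution N \<kappa> h a x v" and N: "N \<ge> 1" and c1: "0 < c1"
    and ha: "\<And>r. r \<ge> 0 \<Longrightarrow> c1 \<le> a r \<and> a r \<le> c2"
    and t: "0 \<le> h * \<kappa>" "h * \<kappa> \<le> 1"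
  shows "sqrt (F2 N (v (Suc n))) \<le> (1 - h * \<kappa> + 2 * (h * \<kappa>) * sqrt (\<Sum>i<N. \<Sum>k<N. (mt_phi N a x n i k - 1 / real N)\<^sup>2)) * sqrt (F2 N (v n))"
proof -
  have "sqrt (F2 N (v (Suc n))) = frob N (\<lambda>i j. (v n i + (h * \<kappa>) *\<^sub>R (\<Sum>k<N. mt_phi N a x n i k *\<^sub>R (v n k - v n i)))
       - (v n j + (h * \<kappa>) *\<^sub>R (\<Sum>k<N. mt_phi N a x n j k *\<^sub>R (v n k - v n j))))"
    unfolding frob_diff[symmetric] using sol unfolding mt_solution_def
    by (intro frob_cong) simp
  also have "\<dots> \<le> (1 - h * \<kappa> + 2 * (h * \<kappa>) * sqrt (\<Sum>i<N. \<Sum>k<N. (mt_phi N a x n i k - 1 / real N)\<^sup>2)) * sqrt (F2 N (v n))"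
    by (rule contract[OF N _ t]) (rule phi_rows[OF N c1 ha])
  finally show ?thesis .
qed


lemma dev_sqrt:
  assumes N: "N \<ge> 1" and c1: "0 < c1" and ha: "\<And>r. r \<ge> 0 \<Longrightarrow> c1 \<le> a r \<and> a r \<le> c2"
    and hL: "\<And>r1 r2. r1 \<ge> 0 \<Longrightarrow> r2 \<ge> 0 \<Longrightarrow> \<bar>a r1 - a r2\<bar> \<le> La * \<bar>r1 - r2\<bar>"
    and La: "La \<ge> 0"
  shows "sqrt (\<Sum>i<N. \<Sum>j<N. (mt_phi N a x n i j - 1 / real N)\<^sup>2) \<le> La / (real N * c1) * sqrt (F2 N (x n))"
proof -
  have "sqrt (\<Sum>i<N. \<Sum>j<N. (mt_phi N a x n i j - 1 / real N)\<^sup>2) \<le> sqrt ((La / (real N * c1))\<^sup>2 * F2 N (x n))"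
    by (rule real_sqrt_le_mono, rule phi_dev[OF N c1 ha hL La])
  also have "\<dots> = La / (real N * c1) * sqrt (F2 N (x n))"
    using La c1 by (simp add: real_sqrt_mult)
  finally show ?thesis .
qed

lemma flock_sol:
  assumes sol: "mt_solution N \<kappa> h a x v" and N: "N \<ge> 1" and c1: "0 < c1"
    and ha: "\<And>r. r \<ge> 0 \<Longrightarrow> c1 \<le> a r \<and> a r \<le> c2"
    and hL: "\<And>r1 r2. r1 \<ge> 0 \<Longrightarrow> r2 \<ge> 0 \<Longrightarrow> \<bar>a r1 - a r2\<bar> \<le> La * \<bar>r1 - r2\<bar>"
    and La: "La \<ge> 0" and M: "M > 0" and LM: "La * M / c1 \<le> 1 / 8"
    and k: "\<kappa> > 0" and h: "h > 0" and t: "h * \<kappa> < 1"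
    and iX: "sqrt (F2 N (x 0)) < M"
    and iV: "sqrt (F2 N (v 0)) < \<kappa> * ((M - M\<^sup>2 / (8 * M)) - (sqrt (F2 N (x 0)) - (sqrt (F2 N (x 0)))\<^sup>2 / (8 * M)))"
  shows "sqrt (F2 N (x n)) < M"
proof (rule flock[where V = "\<lambda>n. sqrt (F2 N (v n))" and X = "\<lambda>n. sqrt (F2 N (x n))", OF M k h t])
  show "\<And>n. 0 \<le> sqrt (F2 N (x n))" "\<And>n. 0 \<le> sqrt (F2 N (v n))" by (simp_all add: F2_nonneg)
  show "\<And>n. sqrt (F2 N (x (Suc n))) \<le> sqrt (F2 N (x n)) + h * sqrt (F2 N (v n))"
    using step_x[OF sol] h by simp
  show "sqrt (F2 N (x 0)) < M" by (rule iX)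
  show "sqrt (F2 N (v 0)) < \<kappa> * ((M - M\<^sup>2 / (8 * M)) - (sqrt (F2 N (x 0)) - (sqrt (F2 N (x 0)))\<^sup>2 / (8 * M)))"
    by (rule iV)
  fix n
  have Np: "real N \<ge> 1" using N by simp
  have "La / (real N * c1) \<le> La / c1"
    using La c1 Np by (intro divide_left_mono) (auto simp: mult_le_cancel_right1)
  also have "La / c1 \<le> 1 / (8 * M)" using LM M c1 by (simp add: field_simps)
  finally have B: "La / (real N * c1) \<le> 1 / (8 * M)" .
  have "2 * sqrt (\<Sum>i<N. \<Sum>k<N. (mt_phi N a x n i k - 1 / real N)\<^sup>2) \<le> 2 * (La / (real N * c1) * sqrt (F2 N (x n)))"
    using dev_sqrt[OF N c1 ha hL La, of x n] by linarith
  also have "\<dots> \<le> 2 * (1 / (8 * M) * sqrt (F2 N (x n)))"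
    using B by (intro mult_left_mono mult_right_mono) (auto simp: F2_nonneg)
  finally have d: "2 * sqrt (\<Sum>i<N. \<Sum>k<N. (mt_phi N a x n i k - 1 / real N)\<^sup>2) \<le> sqrt (F2 N (x n)) / (4 * M)"
    by simp
  have "sqrt (F2 N (v (Suc n))) \<le> (1 - h * \<kappa> + 2 * (h * \<kappa>) * sqrt (\<Sum>i<N. \<Sum>k<N. (mt_phi N a x n i k - 1 / real N)\<^sup>2)) * sqrt (F2 N (v n))"
    using h k t by (intro step_v[OF sol N c1 ha]) auto
  also have "\<dots> \<le> (1 - h * \<kappa> + h * \<kappa> * sqrt (F2 N (x n)) / (4 * M)) * sqrt (F2 N (v n))"
  proof (rule mult_right_mono)
    have "h * \<kappa> * (2 * sqrt (\<Sum>i<N. \<Sum>k<N. (mt_phi N a x n i k - 1 / real N)\<^sup>2)) \<le> h * \<kappa> * (sqrt (F2 N (x n)) / (4 * M))"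
      using d h k by (intro mult_left_mono) auto
    then show "1 - h * \<kappa> + 2 * (h * \<kappa>) * sqrt (\<Sum>i<N. \<Sum>k<N. (mt_phi N a x n i k - 1 / real N)\<^sup>2)
        \<le> 1 - h * \<kappa> + h * \<kappa> * sqrt (F2 N (x n)) / (4 * M)" by simp
  qed (simp add: F2_nonneg)
  finally show "sqrt (F2 N (v (Suc n))) \<le> (1 - h * \<kappa> + h * \<kappa> * sqrt (F2 N (x n)) / (4 * M)) * sqrt (F2 N (v n))" .
qed




lemma sq_diff_le: "((p::real) - q)\<^sup>2 \<le> 2 * (p - c)\<^sup>2 + 2 * (q - c)\<^sup>2"
proof -
  have "0 \<le> ((p - c) + (q - c))\<^sup>2" by simp
  then show ?thesis by (simp add: power2_eq_square algebra_simps)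
qed

lemma vec_rearr: "(a::'v::real_vector) + S1 - (b + S2) = (a - b) + (S1 - S2)"
  by (simp add: algebra_simps)

lemma pt_rearr: "(q::real) *\<^sub>R ((v1 - u1) - (v2 - u2)) + (p - q) *\<^sub>R (v1 - v2) = p *\<^sub>R (v1 - v2) - q *\<^sub>R (u1 - (u2::'v::real_vector))"
  by (simp add: algebra_simps)

theorem proposition4p2:
  fixes N :: nat and \<kappa> h c1 c2 La :: real and a :: "real \<Rightarrow> real"
    and x v xb vb :: "nat \<Rightarrow> nat \<Rightarrow> real^'d"
  defines "M \<equiv> Mconst N La c1 c2"
  defines "lam \<equiv> (\<lambda>n. Min ((\<lambda>(i,j). mt_phi N a xb n i j + mt_phi N a xb n j i) ` ({..<N} \<times> {..<N})))"
  defines "alpha \<equiv> (\<lambda>n. Max ((\<lambda>(i,j). (1 - mt_phi N a xb n i j - mt_phi N a xb n i i)\<^sup>2) ` ({..<N} \<times> {..<N})))"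
  assumes hN: "N \<ge> 1" and hk: "\<kappa> > 0" and hh: "h > 0" "h < 1" "h < 1 / \<kappa>"
    and hc: "0 < c1" "c1 \<le> c2"
    and ha: "\<And>r. r \<ge> 0 \<Longrightarrow> c1 \<le> a r \<and> a r \<le> c2"
    and hL: "La > 0" "\<And>r1 r2. r1 \<ge> 0 \<Longrightarrow> r2 \<ge> 0 \<Longrightarrow> \<bar>a r1 - a r2\<bar> \<le> La * \<bar>r1 - r2\<bar>"
    and sol1: "mt_solution N \<kappa> h a x v"
    and sol2: "mt_solution N \<kappa> h a xb vb"
    and init_x: "max (frob N (Delta x 0)) (frob N (Delta xb 0)) < M"
    and init_v: "frob N (Delta v 0) < \<kappa> * integral {frob N (Delta x 0)..M} (psi N La c1 c2)"
    and init_vb: "frob N (Delta vb 0) < \<kappa> * integral {frob N (Delta xb 0)..M} (psi N La c1 c2)"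
  shows "(frob N (\<lambda>i j. Delta v (Suc n) i j - Delta vb (Suc n) i j))\<^sup>2
     \<le> ((1 - h * \<kappa> * lam n)\<^sup>2
          + 4 * h\<^sup>2 * \<kappa>\<^sup>2 * (alpha n + La\<^sup>2 * M\<^sup>2 / (real N * c1\<^sup>2) * (1 + c2 / c1)\<^sup>2)
          + 2 * sqrt 2 * h * \<kappa> * (1 - h * \<kappa> * lam n)
              * sqrt (alpha n + La\<^sup>2 * M\<^sup>2 / c1\<^sup>2 * (1 + c2 / c1)\<^sup>2))
         * (frob N (\<lambda>i j. Delta v n i j - Delta vb n i j))\<^sup>2
       + (8 * h * \<kappa> * La * M / c1 * (1 - h * \<kappa> * lam n) * (1 + c2 / c1))
         * frob N (\<lambda>i j. Delta v n i j - Delta vb n i j) * frob N (Delta v n)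
       + (32 * h\<^sup>2 * \<kappa>\<^sup>2 * La\<^sup>2 * M\<^sup>2 / c1\<^sup>2 * (1 + c2 / c1)\<^sup>2)
         * (frob N (Delta v n))\<^sup>2"
proof (cases "N = 1")
  case True
  then show ?thesis by (simp add: frob_def Delta_def)
next
  case False
  with hN have N2: "N \<ge> 2" by simp
  define t where "t = h * \<kappa>"
  have t0: "0 < t" using hk hh by (simp add: t_def)
  have t1: "t < 1" using hh(3) hk by (simp add: t_def less_divide_eq)
  define P where "P = phi_lip N La c1 c2"
  have Nr: "real N \<ge> 2" using N2 by simp
  have Pp: "P > 0" using hL hc hN unfolding P_def phi_lip_def
    by (intro mult_pos_pos divide_pos_pos) (auto intro: add_pos_nonneg)
  have Mdef: "M = 1 / (4 * real N * P)" by (simp add: M_def Mconst_def P_def)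
  have Mp: "M > 0" using Pp Nr by (simp add: Mdef)
  have MP: "4 * M * (P * real N) = 1" using Pp Nr by (simp add: Mdef field_simps)
  have key: "La * M / c1 * (1 + c2 / c1) = 1 / 4"
  proof -
    have PN: "P * real N = La / c1 * (1 + c2 / c1)" using Nr unfolding P_def phi_lip_def by simp
    have "La * M / c1 * (1 + c2 / c1) = M * (P * real N)" unfolding PN by simp
    then show ?thesis using MP by simp
  qed
  have c21: "1 + c2 / c1 \<ge> 2" using hc by (simp add: field_simps)
  have LM0: "La * M / c1 \<ge> 0" using hL Mp hc by simp
  have LM: "La * M / c1 \<le> 1 / 8"
  proof -
    have "La * M / c1 * 2 \<le> La * M / c1 * (1 + c2 / c1)" using c21 LM0 by (intro mult_left_mono) auto
    then have "La * M / c1 * 2 \<le> 1 / 4" using key by linarith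
    then show ?thesis by linarith
  qed
  have psi_eq: "psi N La c1 c2 = (\<lambda>s. 1 - (P * real N) * s)"
    by (rule ext) (simp add: psi_def P_def)
  have F_x: "\<And>y m. frob N (Delta y m) = sqrt (F2 N (y m))" by (rule frob_Delta)
  have fl: "sqrt (F2 N (x m)) < M" for m
  proof (rule flock_sol[OF sol1 hN hc(1) ha hL(2) _ Mp LM hk hh(1)])
    show "0 \<le> La" using hL by simp
    show "h * \<kappa> < 1" using t1 by (simp add: t_def)
    show "sqrt (F2 N (x 0)) < M" using init_x by (simp add: F_x)
    show "sqrt (F2 N (v 0)) < \<kappa> * (M - M\<^sup>2 / (8 * M) - (sqrt (F2 N (x 0)) - (sqrt (F2 N (x 0)))\<^sup>2 / (8 * M)))"
      using init_v integral_psi[OF MP Mp, of "sqrt (F2 N (x 0))"] init_x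
      by (simp add: F_x psi_eq)
  qed
  have flb: "sqrt (F2 N (xb m)) < M" for m
  proof (rule flock_sol[OF sol2 hN hc(1) ha hL(2) _ Mp LM hk hh(1)])
    show "0 \<le> La" using hL by simp
    show "h * \<kappa> < 1" using t1 by (simp add: t_def)
    show "sqrt (F2 N (xb 0)) < M" using init_x by (simp add: F_x)
    show "sqrt (F2 N (vb 0)) < \<kappa> * (M - M\<^sup>2 / (8 * M) - (sqrt (F2 N (xb 0)) - (sqrt (F2 N (xb 0)))\<^sup>2 / (8 * M)))"
      using init_vb integral_psi[OF MP Mp, of "sqrt (F2 N (xb 0))"] init_x
      by (simp add: F_x psi_eq)
  qed

  define w where "w i = v n i - vb n i" for i
  define pb where "pb = mt_phi N a xb n"
  define p where "p = mt_phi N a x n"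
  define A where "A i = w i + t *\<^sub>R (\<Sum>k<N. pb i k *\<^sub>R (w k - w i))" for i
  define e where "e i = (\<Sum>k<N. (p i k - pb i k) *\<^sub>R (v n k - v n i))" for i
  define X where "X = sqrt (F2 N w)"
  define V where "V = sqrt (F2 N (v n))"
  define Sb where "Sb = (\<Sum>i<N. \<Sum>k<N. (pb i k - 1 / real N)\<^sup>2)"
  define Sa where "Sa = (\<Sum>i<N. \<Sum>k<N. (p i k - 1 / real N)\<^sup>2)"
  define Se where "Se = (\<Sum>i<N. \<Sum>k<N. (p i k - pb i k)\<^sup>2)"
  define R where "R = frob N (\<lambda>i j. Delta v (Suc n) i j - Delta vb (Suc n) i j)"
  define rho where "rho = 1 - t + 2 * t * sqrt Sb"
  define eps where "eps = t * sqrt (4 * real N * Se)"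
  have Np: "real N > 0" using Nr by simp
  have X0: "X \<ge> 0" and V0: "V \<ge> 0" by (simp_all add: X_def V_def F2_nonneg)
  have Sb0: "Sb \<ge> 0" and Se0: "Se \<ge> 0" by (simp_all add: Sb_def Se_def sum_nonneg)
  have upd: "v (Suc n) i - vb (Suc n) i = A i + t *\<^sub>R e i" if "i < N" for i
  proof -
    have s1: "v (Suc n) i = v n i + t *\<^sub>R (\<Sum>k<N. p i k *\<^sub>R (v n k - v n i))"
      using sol1 that unfolding mt_solution_def by (simp add: t_def p_def)
    have s2: "vb (Suc n) i = vb n i + t *\<^sub>R (\<Sum>k<N. pb i k *\<^sub>R (vb n k - vb n i))"
      using sol2 that unfolding mt_solution_def by (simp add: t_def pb_def)
    have "(\<Sum>k<N. pb i k *\<^sub>R (w k - w i)) + e i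
        = (\<Sum>k<N. pb i k *\<^sub>R (w k - w i) + (p i k - pb i k) *\<^sub>R (v n k - v n i))"
      unfolding e_def by (simp add: sum.distrib)
    also have "\<dots> = (\<Sum>k<N. p i k *\<^sub>R (v n k - v n i) - pb i k *\<^sub>R (vb n k - vb n i))"
      unfolding w_def by (intro sum.cong refl) (rule pt_rearr)
    also have "\<dots> = (\<Sum>k<N. p i k *\<^sub>R (v n k - v n i)) - (\<Sum>k<N. pb i k *\<^sub>R (vb n k - vb n i))"
      by (simp add: sum_subtractf)
    finally have "(\<Sum>k<N. pb i k *\<^sub>R (w k - w i)) + e i = (\<Sum>k<N. p i k *\<^sub>R (v n k - v n i)) - (\<Sum>k<N. pb i k *\<^sub>R (vb n k - vb n i))" .
    then have "t *\<^sub>R ((\<Sum>k<N. pb i k *\<^sub>R (w k - w i)) + e i) = t *\<^sub>R ((\<Sum>k<N. p i k *\<^sub>R (v n k - v n i)) - (\<Sum>k<N. pb i k *\<^sub>R (vb n k - vb n i)))"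
      by (rule arg_cong)
    then have eq: "t *\<^sub>R (\<Sum>k<N. pb i k *\<^sub>R (w k - w i)) + t *\<^sub>R e i = t *\<^sub>R (\<Sum>k<N. p i k *\<^sub>R (v n k - v n i)) - t *\<^sub>R (\<Sum>k<N. pb i k *\<^sub>R (vb n k - vb n i))"
      by (simp only: scaleR_right_distrib scaleR_right_diff_distrib)
    have "A i + t *\<^sub>R e i = w i + (t *\<^sub>R (\<Sum>k<N. p i k *\<^sub>R (v n k - v n i)) - t *\<^sub>R (\<Sum>k<N. pb i k *\<^sub>R (vb n k - vb n i)))"
      unfolding A_def by (simp only: add.assoc eq)
    then show ?thesis unfolding s1 s2 w_def by (simp only: vec_rearr)
  qed
  have R_le: "R \<le> frob N (\<lambda>i j. A i - A j) + t * frob N (\<lambda>i j. e i - e j)"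
  proof -
    have "R = frob N (\<lambda>i j. (A i - A j) + t *\<^sub>R (e i - e j))"
      unfolding R_def Delta_def
    proof (rule frob_cong)
      fix i j assume "i < N" "j < N"
      then show "v (Suc n) i - v (Suc n) j - (vb (Suc n) i - vb (Suc n) j) = A i - A j + t *\<^sub>R (e i - e j)"
        using upd[of i] upd[of j] by (simp add: algebra_simps)
    qed
    also have "\<dots> \<le> frob N (\<lambda>i j. A i - A j) + frob N (\<lambda>i j. t *\<^sub>R (e i - e j))"
      by (rule frob_triangle)
    finally show ?thesis using t0 by (simp add: frob_scale)
  qed
  have A_le: "frob N (\<lambda>i j. A i - A j) \<le> rho * X"
    unfolding A_def rho_def X_def Sb_def
    using contract[OF hN _ , of pb t w] phi_rows[OF hN hc(1) ha, where x=xb and n=n] t0 t1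
    by (simp add: pb_def)
  have e_le: "frob N (\<lambda>i j. e i - e j) \<le> sqrt (4 * real N * Se) * V"
  proof -
    have "(frob N (\<lambda>i j. e i - e j))\<^sup>2 \<le> 4 * real N * (Se * F2 N (v n))"
      unfolding e_def Se_def by (rule E_bound)
    then have "(frob N (\<lambda>i j. e i - e j))\<^sup>2 \<le> (sqrt (4 * real N * Se) * V)\<^sup>2"
      using Se0 by (simp add: V_def power_mult_distrib F2_nonneg)
    then show ?thesis
      by (rule power2_le_imp_le) (simp add: V_def Se0 F2_nonneg)
  qed
  have R_le2: "R \<le> rho * X + eps * V"
  proof -
    have "t * frob N (\<lambda>i j. e i - e j) \<le> t * (sqrt (4 * real N * Se) * V)"
      using e_le t0 by (intro mult_left_mono) auto
    then show ?thesis using R_le A_le unfolding eps_def by simp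
  qed
  have R0: "R \<ge> 0" unfolding R_def by (rule frob_nonneg)
  have LN: "La / (real N * c1) * M \<le> 1 / (8 * real N)"
  proof -
    have "La / (real N * c1) * M = (La * M / c1) / real N" using Np by simp
    also have "\<dots> \<le> (1 / 8) / real N" using LM Np by (intro divide_right_mono) auto
    finally show ?thesis by simp
  qed
  have LN0: "La / (real N * c1) \<ge> 0" using hL hc Np by simp
  have sSb: "sqrt Sb \<le> 1 / (8 * real N)"
  proof -
    have "sqrt Sb \<le> La / (real N * c1) * sqrt (F2 N (xb n))"
      unfolding Sb_def pb_def using dev_sqrt[OF hN hc(1) ha hL(2), where x=xb and n=n] hL by simp
    also have "\<dots> \<le> La / (real N * c1) * M"
      using flb[of n] LN0 by (intro mult_left_mono) auto
    finally show ?thesis using LN by simp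
  qed
  have sSa: "sqrt Sa \<le> 1 / (8 * real N)"
  proof -
    have "sqrt Sa \<le> La / (real N * c1) * sqrt (F2 N (x n))"
      unfolding Sa_def p_def using dev_sqrt[OF hN hc(1) ha hL(2), where x=x and n=n] hL by simp
    also have "\<dots> \<le> La / (real N * c1) * M"
      using fl[of n] LN0 by (intro mult_left_mono) auto
    finally show ?thesis using LN by simp
  qed
  have Sb_le: "Sb \<le> 1 / (64 * (real N)\<^sup>2)"
  proof -
    have "(sqrt Sb)\<^sup>2 \<le> (1 / (8 * real N))\<^sup>2" using sSb Sb0 by (intro power_mono) auto
    then show ?thesis using Sb0 by (simp add: power2_eq_square)
  qed
  have Sa_le: "Sa \<le> 1 / (64 * (real N)\<^sup>2)"
  proof -
    have Sa0: "Sa \<ge> 0" by (simp add: Sa_def sum_nonneg)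
    have "(sqrt Sa)\<^sup>2 \<le> (1 / (8 * real N))\<^sup>2" using sSa Sa0 by (intro power_mono) auto
    then show ?thesis using Sa0 by (simp add: power2_eq_square)
  qed
  have Se_le: "Se \<le> 1 / (16 * (real N)\<^sup>2)"
  proof -
    have "Se \<le> (\<Sum>i<N. \<Sum>k<N. 2 * (p i k - 1 / real N)\<^sup>2 + 2 * (pb i k - 1 / real N)\<^sup>2)"
      unfolding Se_def by (intro sum_mono sq_diff_le)
    also have "\<dots> = 2 * Sa + 2 * Sb"
      by (simp add: Sa_def Sb_def sum.distrib sum_distrib_left)
    finally show ?thesis using Sa_le Sb_le by simp
  qed
  have rho_le: "rho \<le> 1 - t + t / (4 * real N)"
  proof -
    have "2 * t * sqrt Sb \<le> 2 * t * (1 / (8 * real N))" using sSb t0 by (intro mult_left_mono) auto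
    then show ?thesis unfolding rho_def by simp
  qed
  have rho0: "rho \<ge> 0" unfolding rho_def using t0 t1 Sb0 by simp
  have eps0: "eps \<ge> 0" unfolding eps_def using t0 Se0 by simp
  have eps2: "eps\<^sup>2 \<le> t\<^sup>2 / 8"
  proof -
    have "eps\<^sup>2 = t\<^sup>2 * (4 * real N * Se)" unfolding eps_def using Se0 Np
      by (simp add: power_mult_distrib)
    also have "\<dots> \<le> t\<^sup>2 * (4 * real N * (1 / (16 * (real N)\<^sup>2)))"
      using Se_le Np by (intro mult_left_mono) auto
    also have "\<dots> = t\<^sup>2 / (4 * real N)" using Np by (simp add: power2_eq_square field_simps)
    also have "\<dots> \<le> t\<^sup>2 / 8" using Nr by (intro divide_left_mono) auto
    finally show ?thesis .
  qed
  have lam_le: "lam n \<le> 2 / real N"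
  proof -
    define f where "f = (\<lambda>(i,j). pb i j + pb j i)"
    have fin: "finite ({..<N} \<times> {..<N})" by simp
    have lamf: "lam n = Min (f ` ({..<N} \<times> {..<N}))" by (simp add: lam_def f_def pb_def)
    have allf: "\<forall>q\<in>{..<N} \<times> {..<N}. lam n \<le> f q"
      unfolding lamf using fin by (auto intro: Min_le)
    have "of_nat (card ({..<N} \<times> {..<N})) * lam n \<le> sum f ({..<N} \<times> {..<N})"
      by (rule sum_bounded_below) (use allf in blast)
    also have "sum f ({..<N} \<times> {..<N}) = (\<Sum>i<N. \<Sum>j<N. pb i j) + (\<Sum>i<N. \<Sum>j<N. pb j i)"
      by (simp add: f_def sum.cartesian_product[symmetric] sum.distrib)
    also have "(\<Sum>i<N. \<Sum>j<N. pb j i) = (\<Sum>j<N. \<Sum>i<N. pb j i)" by (rule sum.swap)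
    also have "(\<Sum>j<N. \<Sum>i<N. pb j i) = real N"
      using phi_rows[OF hN hc(1) ha, where x=xb and n=n] by (simp add: pb_def)
    finally have "real N * real N * lam n \<le> 2 * real N"
      using phi_rows[OF hN hc(1) ha, where x=xb and n=n] by (simp add: pb_def card_cartesian_product)
    then show ?thesis using Np by (simp add: field_simps)
  qed
  have mu: "1 - t * lam n \<ge> 1 - 2 * t / real N"
  proof -
    have "t * lam n \<le> t * (2 / real N)" using lam_le t0 by (intro mult_left_mono) auto
    then show ?thesis by (simp add: mult.commute)
  qed
  have al0: "alpha n \<ge> 0"
  proof -
    have "(1 - mt_phi N a xb n 0 0 - mt_phi N a xb n 0 0)\<^sup>2 \<le> alpha n"
      unfolding alpha_def using hN by (intro Max_ge) (auto intro!: image_eqI[where x="(0,0)"])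
    then show ?thesis by (smt (verit) zero_le_power2)
  qed
  have main: "R\<^sup>2 \<le> ((1 - t * lam n)\<^sup>2 + 4 * t\<^sup>2 * (alpha n + 1 / (16 * real N)) + 2 * sqrt 2 * t * (1 - t * lam n) * sqrt (alpha n + 1 / 16)) * X\<^sup>2
              + 2 * t * (1 - t * lam n) * X * V + 2 * t\<^sup>2 * V\<^sup>2"
    by (rule final_alg[OF Nr t0 t1 X0 V0 R0 R_le2 rho0 rho_le eps0 eps2 mu al0])
  have XX: "frob N (\<lambda>i j. Delta v n i j - Delta vb n i j) = X"
    unfolding X_def frob_diff[symmetric] Delta_def w_def by (intro frob_cong) (simp add: algebra_simps)
  have VV: "frob N (Delta v n) = V" unfolding V_def by (rule frob_Delta)
  have K1: "La\<^sup>2 * M\<^sup>2 / c1\<^sup>2 * (1 + c2 / c1)\<^sup>2 = 1 / 16"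
  proof -
    have "La\<^sup>2 * M\<^sup>2 / c1\<^sup>2 * (1 + c2 / c1)\<^sup>2 = (La * M / c1 * (1 + c2 / c1))\<^sup>2"
      by (simp add: power_mult_distrib power_divide)
    also have "\<dots> = (1 / 4)\<^sup>2" by (simp only: key)
    also have "\<dots> = 1 / 16" by (simp add: power_divide)
    finally show ?thesis .
  qed
  have K2: "La\<^sup>2 * M\<^sup>2 / (real N * c1\<^sup>2) * (1 + c2 / c1)\<^sup>2 = 1 / (16 * real N)"
  proof -
    have "La\<^sup>2 * M\<^sup>2 / (real N * c1\<^sup>2) * (1 + c2 / c1)\<^sup>2 = (La\<^sup>2 * M\<^sup>2 / c1\<^sup>2 * (1 + c2 / c1)\<^sup>2) / real N"
      by simp
    also have "\<dots> = (1 / 16) / real N" by (simp only: K1)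
    also have "\<dots> = 1 / (16 * real N)" by simp
    finally show ?thesis .
  qed
  have K3: "8 * h * \<kappa> * La * M / c1 * (1 - h * \<kappa> * lam n) * (1 + c2 / c1) = 2 * t * (1 - t * lam n)"
  proof -
    have "8 * h * \<kappa> * La * M / c1 * (1 - h * \<kappa> * lam n) * (1 + c2 / c1)
        = 8 * t * (1 - t * lam n) * (La * M / c1 * (1 + c2 / c1))"
      by (simp add: t_def)
    also have "\<dots> = 8 * t * (1 - t * lam n) * (1 / 4)" by (simp only: key)
    also have "\<dots> = 2 * t * (1 - t * lam n)" by simp
    finally show ?thesis .
  qed
  have K4: "32 * h\<^sup>2 * \<kappa>\<^sup>2 * La\<^sup>2 * M\<^sup>2 / c1\<^sup>2 * (1 + c2 / c1)\<^sup>2 = 2 * t\<^sup>2"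
  proof -
    have "32 * h\<^sup>2 * \<kappa>\<^sup>2 * La\<^sup>2 * M\<^sup>2 / c1\<^sup>2 * (1 + c2 / c1)\<^sup>2 = 32 * t\<^sup>2 * (La\<^sup>2 * M\<^sup>2 / c1\<^sup>2 * (1 + c2 / c1)\<^sup>2)"
      by (simp add: t_def power_mult_distrib)
    also have "\<dots> = 32 * t\<^sup>2 * (1 / 16)" by (simp only: K1)
    also have "\<dots> = 2 * t\<^sup>2" by simp
    finally show ?thesis .
  qed
  have K5: "4 * h\<^sup>2 * \<kappa>\<^sup>2 = 4 * t\<^sup>2" by (simp add: t_def power_mult_distrib)
  have K6: "2 * sqrt 2 * h * \<kappa> * (1 - h * \<kappa> * lam n) = 2 * sqrt 2 * t * (1 - t * lam n)"
    by (simp add: t_def)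
  have K7: "1 - h * \<kappa> * lam n = 1 - t * lam n" by (simp add: t_def)
  show ?thesis
    unfolding R_def[symmetric] XX VV K1 K2 K3 K4 K5 K6 unfolding K7 using main
    by (simp add: mult.assoc)
qed


end
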